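(* Consider any online scheme for \textsc{Connectivity} or for \textsc{Bipartiteness} of graphs given as streams in the XOR update model on $n$ (more precisely $n+1$) vertices, with help cost $c_a$ and space cost $c_v$. Then $(c_a+n)\cdot c_v=\Omega(n^2)$, even under the promise that the first $m-n$ stream updates are pairwise distinct and the last $n$ updates are all incident to a single vertex. In particular, the total cost $c_a+c_v$ of any such scheme is $\Omega(n)$.
   Context: XOR update model: a stream $\langle e_1,\dots,e_m\rangle$ of undirected vertex pairs defines the graph whose edge set is $\{e: |\{i:e_i=e\}|\text{ odd}\}$. \textsc{Connectivity} (resp. \textsc{Bipartiteness}): decide whether this graph is connected (resp. bipartite). Annotated data streams: a scheme is a pair $(\mathfrak h,V)$ where $\mathfrak h_i$ is the prover's annotation inserted after token $x_i$, and $V$ is a single-pass streaming verifier with private randomness that outputs a value or $\bot$. Online: $\mathfrak h_i$ depends only on $x_1,\dots,x_i$. Completeness: with the honest annotation $V$ outputs $F(\mathbf x)$ with probability $\ge 2/3$; soundness: for every annotation, $V$ outputs a value outside $\{F(\mathbf x),\bot\}$ with probability $\le 1/3$. Help cost $c_a$: maximum total annotation length in bits; space cost $c_v$: bits of memory used by $V$. *)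

theory Defs
  imports "HOL-Probability.Probability"
begin

type_synonym tok = "nat \<times> nat"

text \<open>Vertex set is {0..n} (n+1 vertices); a token is a vertex pair.\<close>
definition valid_tok :: "nat \<Rightarrow> tok \<Rightarrow> bool" where
  "valid_tok n x = (fst x \<noteq> snd x \<and> fst x \<le> n \<and> snd x \<le> n)"

definition tok_edge :: "tok \<Rightarrow> nat set" where
  "tok_edge x = {fst x, snd x}"

definition xor_edges :: "tok list \<Rightarrow> nat set set" where
  "xor_edges xs = {e. odd (length (filter (\<lambda>x. tok_edge x = e) xs))}"

definition connected_xor :: "nat \<Rightarrow> tok list \<Rightarrow> bool" where
  "connected_xor n xs =
     (\<forall>u\<le>n. \<forall>v\<le>n. (u, v) \<in> {(a, b). a \<le> n \<and> b \<le> n \<and> {a, b} \<in> xor_edges xs}\<^sup>*)"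

definition bipartite_xor :: "nat \<Rightarrow> tok list \<Rightarrow> bool" where
  "bipartite_xor n xs =
     (\<exists>c :: nat \<Rightarrow> bool. \<forall>u v. {u, v} \<in> xor_edges xs \<longrightarrow> c u \<noteq> c v)"

definition promise :: "nat \<Rightarrow> tok list \<Rightarrow> bool" where
  "promise n xs =
     ((\<forall>x\<in>set xs. valid_tok n x) \<and> n \<le> length xs \<and>
      distinct (map tok_edge (take (length xs - n) xs)) \<and>
      (\<exists>w\<le>n. \<forall>x\<in>set (drop (length xs - n) xs). w \<in> tok_edge x))"

text \<open>A streaming verifier with private randomness: randomized initial state,
  randomized transitions on each stream token and on each annotation bit, and an
  output map (None = reject/bot).\<close>
record verifier =
  v_init :: "nat pmf"
  v_tok  :: "nat \<Rightarrow> tok \<Rightarrow> nat pmf"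
  v_bit  :: "nat \<Rightarrow> bool \<Rightarrow> nat pmf"
  v_out  :: "nat \<Rightarrow> bool option"

fun read_bits :: "verifier \<Rightarrow> bool list \<Rightarrow> nat \<Rightarrow> nat pmf" where
  "read_bits V [] s = return_pmf s"
| "read_bits V (b # bs) s = bind_pmf (v_bit V s b) (read_bits V bs)"

fun exec :: "verifier \<Rightarrow> (tok \<times> bool list) list \<Rightarrow> nat \<Rightarrow> nat pmf" where
  "exec V [] s = return_pmf s"
| "exec V ((x, a) # rest) s =
     bind_pmf (v_tok V s x) (\<lambda>s'. bind_pmf (read_bits V a s') (exec V rest))"

definition run_out :: "verifier \<Rightarrow> tok list \<Rightarrow> bool list list \<Rightarrow> bool option pmf" where
  "run_out V xs hs = map_pmf (v_out V) (bind_pmf (v_init V) (exec V (zip xs hs)))"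

text \<open>Online honest annotation: h_i is a function of the prefix x_1..x_i only.\<close>
definition honest :: "(tok list \<Rightarrow> bool list) \<Rightarrow> tok list \<Rightarrow> bool list list" where
  "honest h xs = map (\<lambda>i. h (take (Suc i) xs)) [0..<length xs]"

text \<open>(h, V) is an online scheme for F on n+1 vertices (under the promise), with
  help cost ca and space cost cv (V uses a state set S of at most 2^cv states).\<close>
definition online_scheme ::
  "nat \<Rightarrow> (tok list \<Rightarrow> bool) \<Rightarrow> nat set \<Rightarrow> nat \<Rightarrow> nat \<Rightarrow>
   (tok list \<Rightarrow> bool list) \<Rightarrow> verifier \<Rightarrow> bool" where
  "online_scheme n F S cv ca h V =
     (finite S \<and> card S \<le> 2 ^ cv \<and> set_pmf (v_init V) \<subseteq> S \<and>
      (\<forall>s\<in>S. \<forall>x. valid_tok n x \<longrightarrow> set_pmf (v_tok V s x) \<subseteq> S) \<and>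
      (\<forall>s\<in>S. \<forall>b. set_pmf (v_bit V s b) \<subseteq> S) \<and>
      (\<forall>xs. promise n xs \<longrightarrow>
         sum_list (map length (honest h xs)) \<le> ca \<and>
         measure_pmf.prob (run_out V xs (honest h xs)) {Some (F xs)} \<ge> 2/3 \<and>
         (\<forall>hs. length hs = length xs \<longrightarrow>
            measure_pmf.prob (run_out V xs hs) (- {Some (F xs), None}) \<le> 1/3)))"

end

theory Submission
  imports Defs
begin


lemma sample_exists:
  fixes \<mu> :: "'a pmf" and G :: "('a \<Rightarrow> real) set" and k :: nat
  assumes finG: "finite G" and bnd: "\<And>g s. g \<in> G \<Longrightarrow> 0 \<le> g s \<and> g s \<le> 1"
    and kpos: "k > 0" and small: "2 * real (card G) * exp (- real k / 18) < 1"
  shows "\<exists>f. (\<forall>i<k. f i \<in> set_pmf \<mu>) \<and>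
     (\<forall>g\<in>G. \<bar>(\<Sum>i<k. g (f i)) - real k * measure_pmf.expectation \<mu> g\<bar> < real k / 6)"
proof -
  obtain d where d: "d \<in> set_pmf \<mu>" using set_pmf_not_empty by fastforce
  define M where "M = Pi_pmf {..<k} d (\<lambda>_. \<mu>)"
  define bad where "bad g = {f \<in> space (measure_pmf M). \<bar>(\<Sum>i<k. g (f i)) - real k * measure_pmf.expectation \<mu> g\<bar> \<ge> real k / 6}" for g
  have pb: "measure_pmf.prob M (bad g) \<le> 2 * exp (- real k / 18)" if g: "g \<in> G" for g
  proof -
    have indep: "prob_space.indep_vars (measure_pmf M) (\<lambda>_. borel) (\<lambda>i f. g (f i)) {..<k}"
      unfolding M_def
      by (rule prob_space.indep_vars_compose2[OF measure_pmf.prob_space_axioms indep_vars_Pi_pmf]) auto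
    interpret H: Hoeffding_ineq "measure_pmf M" "{..<k}" "\<lambda>i f. g (f i)" "\<lambda>_. 0" "\<lambda>_. 1"
       "\<Sum>i<k. measure_pmf.expectation M (\<lambda>f. g (f i))"
      by unfold_locales (use indep bnd[OF g] in auto)
    have ex: "measure_pmf.expectation M (\<lambda>f. g (f i)) = measure_pmf.expectation \<mu> g" if "i < k" for i
    proof -
      have "measure_pmf.expectation M (\<lambda>f. g (f i)) = measure_pmf.expectation (map_pmf (\<lambda>f. f i) M) g"
        by simp
      also have "map_pmf (\<lambda>f. f i) M = \<mu>" unfolding M_def using that by (subst Pi_pmf_component) auto
      finally show ?thesis .
    qed
    have "measure_pmf.prob M {x\<in>space M. \<bar>(\<Sum>i<k. g (x i)) - (\<Sum>i<k. measure_pmf.expectation M (\<lambda>f. g (f i)))\<bar> \<ge> real k / 6}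
       \<le> 2 * exp (-2 * (real k / 6)\<^sup>2 / (\<Sum>i<k. (1 - 0)\<^sup>2))"
      by (rule H.Hoeffding_ineq_abs_ge) (use kpos in auto)
    also have "(\<Sum>i<k. measure_pmf.expectation M (\<lambda>f. g (f i))) = real k * measure_pmf.expectation \<mu> g"
      using ex by simp
    also have "-2 * (real k / 6)\<^sup>2 / (\<Sum>i<k. (1 - 0)\<^sup>2) = - real k / 18"
      using kpos by (simp add: power2_eq_square field_simps)
    finally show ?thesis unfolding bad_def .
  qed
  have "measure_pmf.prob M (\<Union>g\<in>G. bad g) \<le> (\<Sum>g\<in>G. measure_pmf.prob M (bad g))"
    by (rule measure_pmf.finite_measure_subadditive_finite) (use finG in auto)
  also have "\<dots> \<le> (\<Sum>g\<in>G. 2 * exp (- real k / 18))" by (rule sum_mono) (use pb in auto)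
  also have "\<dots> < 1" using small by simp
  finally have lt: "measure_pmf.prob M (\<Union>g\<in>G. bad g) < 1" .
  have "\<not> set_pmf M \<subseteq> (\<Union>g\<in>G. bad g)"
  proof
    assume "set_pmf M \<subseteq> (\<Union>g\<in>G. bad g)"
    then have "measure_pmf.prob M (\<Union>g\<in>G. bad g) = 1"
      by (subst measure_pmf.prob_eq_1) (auto simp: AE_measure_pmf_iff)
    with lt show False by simp
  qed
  then obtain f where f: "f \<in> set_pmf M" "f \<notin> (\<Union>g\<in>G. bad g)" by blast
  have "f i \<in> set_pmf \<mu>" if "i < k" for i
    using f(1) that unfolding M_def by (auto simp: set_Pi_pmf PiE_dflt_def)
  moreover have "\<bar>(\<Sum>i<k. g (f i)) - real k * measure_pmf.expectation \<mu> g\<bar> < real k / 6" if "g \<in> G" for g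
    using f(2) that unfolding bad_def by auto
  ultimately show ?thesis by blast
qed

lemma core_count:
  fixes \<mu> :: "'x \<Rightarrow> 'a pmf" and G :: "('a \<Rightarrow> real) set" and k :: nat
  assumes finG: "finite G" and bnd: "\<And>g s. g \<in> G \<Longrightarrow> 0 \<le> g s \<and> g s \<le> 1"
    and kpos: "k > 0" and small: "2 * real (card G) * exp (- real k / 18) < 1"
    and finS: "finite S" and supp: "\<And>x. x \<in> X \<Longrightarrow> set_pmf (\<mu> x) \<subseteq> S"
    and sep: "\<And>x x'. x \<in> X \<Longrightarrow> x' \<in> X \<Longrightarrow> x \<noteq> x' \<Longrightarrow>
       \<exists>g\<in>G. measure_pmf.expectation (\<mu> x) g - measure_pmf.expectation (\<mu> x') g \<ge> 1/3"
  shows "card X \<le> card S ^ k"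
proof -
  have "\<forall>x\<in>X. \<exists>f. (\<forall>i<k. f i \<in> set_pmf (\<mu> x)) \<and>
     (\<forall>g\<in>G. \<bar>(\<Sum>i<k. g (f i)) - real k * measure_pmf.expectation (\<mu> x) g\<bar> < real k / 6)"
    using sample_exists[OF finG _ kpos small] bnd by blast
  then obtain F where F: "\<And>x. x \<in> X \<Longrightarrow> (\<forall>i<k. F x i \<in> set_pmf (\<mu> x)) \<and>
     (\<forall>g\<in>G. \<bar>(\<Sum>i<k. g (F x i)) - real k * measure_pmf.expectation (\<mu> x) g\<bar> < real k / 6)"
    by metis
  define R where "R x = restrict (F x) {..<k}" for x
  have inj: "inj_on R X"
  proof (rule inj_onI, rule ccontr)
    fix x x' assume xx: "x \<in> X" "x' \<in> X" "R x = R x'" "x \<noteq> x'"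
    obtain g where g: "g \<in> G" "measure_pmf.expectation (\<mu> x) g - measure_pmf.expectation (\<mu> x') g \<ge> 1/3"
      using sep[OF xx(1,2,4)] by blast
    have eq: "(\<Sum>i<k. g (F x i)) = (\<Sum>i<k. g (F x' i))"
    proof (rule sum.cong)
      fix i assume "i \<in> {..<k}"
      then have "F x i = F x' i" using xx(3) unfolding R_def by (metis restrict_apply')
      then show "g (F x i) = g (F x' i)" by simp
    qed simp
    have a: "\<bar>(\<Sum>i<k. g (F x i)) - real k * measure_pmf.expectation (\<mu> x) g\<bar> < real k / 6"
      using F[OF xx(1)] g(1) by blast
    have b: "\<bar>(\<Sum>i<k. g (F x' i)) - real k * measure_pmf.expectation (\<mu> x') g\<bar> < real k / 6"
      using F[OF xx(2)] g(1) by blast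
    have "real k * (measure_pmf.expectation (\<mu> x) g - measure_pmf.expectation (\<mu> x') g) < real k / 3"
      using a b eq unfolding abs_less_iff by (simp add: algebra_simps)
    moreover have "real k * (1/3) \<le> real k * (measure_pmf.expectation (\<mu> x) g - measure_pmf.expectation (\<mu> x') g)"
      by (rule mult_left_mono) (use g in auto)
    ultimately show False by simp
  qed
  have img: "R ` X \<subseteq> PiE {..<k} (\<lambda>_. S)"
  proof
    fix r assume "r \<in> R ` X"
    then obtain x where x: "x \<in> X" "r = R x" by blast
    have "F x i \<in> S" if "i < k" for i using F[OF x(1)] supp[OF x(1)] that by blast
    then show "r \<in> PiE {..<k} (\<lambda>_. S)" unfolding x(2) R_def by auto
  qed
  have "card X = card (R ` X)" using card_image[OF inj] by simp
  also have "\<dots> \<le> card (PiE {..<k} (\<lambda>_. S))"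
    by (rule card_mono[OF _ img]) (use finS in \<open>auto intro: finite_PiE\<close>)
  also have "\<dots> = card S ^ k" by (simp add: card_PiE)
  finally show ?thesis .
qed

lemma exec_append: "exec V (ps @ qs) s = bind_pmf (exec V ps s) (exec V qs)"
proof (induction ps arbitrary: s)
  case Nil then show ?case by (simp add: bind_return_pmf)
next
  case (Cons p ps)
  have e: "exec V (ps @ qs) = (\<lambda>s. bind_pmf (exec V ps s) (exec V qs))" using Cons.IH by (intro ext)
  show ?case by (cases p) (simp add: bind_assoc_pmf e)
qed

lemma read_bits_in:
  assumes "s \<in> S" "\<forall>s\<in>S. \<forall>b. set_pmf (v_bit V s b) \<subseteq> S"
  shows "set_pmf (read_bits V bs s) \<subseteq> S"
  using assms(1)
proof (induction bs arbitrary: s)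
  case Nil then show ?case by simp
next
  case (Cons b bs)
  show ?case
  proof
    fix t assume "t \<in> set_pmf (read_bits V (b # bs) s)"
    then obtain s1 where s1: "s1 \<in> set_pmf (v_bit V s b)" "t \<in> set_pmf (read_bits V bs s1)" by auto
    have "s1 \<in> S" using s1(1) assms(2) Cons.prems by blast
    then show "t \<in> S" using Cons.IH s1(2) by blast
  qed
qed

lemma exec_in:
  assumes "s \<in> S" "\<forall>s\<in>S. \<forall>b. set_pmf (v_bit V s b) \<subseteq> S"
    "\<forall>s\<in>S. \<forall>x. valid_tok n x \<longrightarrow> set_pmf (v_tok V s x) \<subseteq> S"
    "\<forall>p\<in>set ps. valid_tok n (fst p)"
  shows "set_pmf (exec V ps s) \<subseteq> S"
  using assms(1,4)
proof (induction ps arbitrary: s)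
  case Nil then show ?case by simp
next
  case (Cons p ps)
  obtain x a where p: "p = (x, a)" by (cases p)
  have vx: "valid_tok n x" using Cons.prems p by auto
  show ?case
  proof
    fix t assume "t \<in> set_pmf (exec V (p # ps) s)"
    then obtain s1 s2 where s1: "s1 \<in> set_pmf (v_tok V s x)" and s2: "s2 \<in> set_pmf (read_bits V a s1)"
      and t: "t \<in> set_pmf (exec V ps s2)" by (auto simp: p)
    have "s1 \<in> S" using s1 assms(3) Cons.prems(1) vx by blast
    then have "s2 \<in> S" using read_bits_in[OF _ assms(2)] s2 by blast
    then show "t \<in> S" using Cons.IH[of s2] Cons.prems(2) t by auto
  qed
qed

lemma honest_append:
  "honest h (P @ Q) = honest h P @ map (\<lambda>i. h (take (Suc i) (P @ Q))) [length P..<length P + length Q]"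
proof -
  have u: "[0..<length (P @ Q)] = [0..<length P] @ [length P..<length P + length Q]"
    using upt_add_eq_append[of 0 "length P" "length Q"] by simp
  have m: "map (\<lambda>i. h (take (Suc i) (P @ Q))) [0..<length P] = honest h P"
    unfolding honest_def by (rule map_cong) auto
  have "honest h (P @ Q) = map (\<lambda>i. h (take (Suc i) (P @ Q))) [0..<length (P @ Q)]"
    unfolding honest_def ..
  also have "\<dots> = map (\<lambda>i. h (take (Suc i) (P @ Q))) [0..<length P] @ map (\<lambda>i. h (take (Suc i) (P @ Q))) [length P..<length P + length Q]"
    unfolding u by (rule map_append)
  finally show ?thesis unfolding m .
qed

lemma length_honest[simp]: "length (honest h xs) = length xs"
  by (simp add: honest_def)

lemma run_split:
  assumes "length hP = length P"
  shows "measure_pmf.prob (run_out V (P @ Q) (hP @ hQ)) {Some b} =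
    measure_pmf.expectation (bind_pmf (v_init V) (exec V (zip P hP)))
      (\<lambda>s. measure_pmf.prob (map_pmf (v_out V) (exec V (zip Q hQ) s)) {Some b})"
proof -
  have "run_out V (P @ Q) (hP @ hQ) =
     bind_pmf (bind_pmf (v_init V) (exec V (zip P hP))) (\<lambda>s. map_pmf (v_out V) (exec V (zip Q hQ) s))"
  proof -
    have z: "zip (P @ Q) (hP @ hQ) = zip P hP @ zip Q hQ" using assms by (simp add: zip_append)
    have "run_out V (P @ Q) (hP @ hQ) = map_pmf (v_out V) (bind_pmf (v_init V) (\<lambda>s. bind_pmf (exec V (zip P hP) s) (exec V (zip Q hQ))))"
      unfolding run_out_def z exec_append ..
    also have "\<dots> = map_pmf (v_out V) (bind_pmf (bind_pmf (v_init V) (exec V (zip P hP))) (exec V (zip Q hQ)))"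
      by (simp only: bind_assoc_pmf)
    also have "\<dots> = bind_pmf (bind_pmf (v_init V) (exec V (zip P hP))) (\<lambda>s. map_pmf (v_out V) (exec V (zip Q hQ) s))"
      by (rule map_bind_pmf)
    finally show ?thesis .
  qed
  then show ?thesis by (simp only: measure_pmf_single pmf_bind)
qed


definition Hs :: "nat \<Rightarrow> nat \<Rightarrow> bool list list set" where
  "Hs n ca = {hs. length hs = n \<and> sum_list (map length hs) \<le> ca}"

lemma two_pow_le_exp: "2 ^ m \<le> exp (real m)"
proof -
  have "(2::real) \<le> exp 1" using exp_ge_add_one_self[of 1] by simp
  then have "(2::real) ^ m \<le> exp 1 ^ m" by (rule power_mono) simp
  also have "\<dots> = exp (real m)" by (simp add: exp_of_nat_mult[symmetric])
  finally show ?thesis .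
qed

lemma scheme_bound:
  fixes P :: "'x \<Rightarrow> tok list"
  assumes sch: "online_scheme n F S cv ca h V"
    and finX: "finite X" and finQ: "finite Qs" and lenQ: "\<forall>Q\<in>Qs. length Q = n"
    and finH: "finite (Hs n ca)"
    and validP: "\<forall>x\<in>X. \<forall>t\<in>set (P x). valid_tok n t"
    and sep: "\<forall>x\<in>X. \<forall>x'\<in>X. x \<noteq> x' \<longrightarrow> (\<exists>Q\<in>Qs. promise n (P x @ Q) \<and>
          promise n (P x' @ Q) \<and> F (P x @ Q) \<noteq> F (P x' @ Q))"
    and cardb: "2 * card Qs * card (Hs n ca) \<le> 2 ^ L"
  shows "card X \<le> 2 ^ (cv * (18 * (L + 2)))"
proof -
  define k where "k = 18 * (L + 2)"
  define tst where "tst = (\<lambda>(Q, hQ, b) s. measure_pmf.prob (map_pmf (v_out V) (exec V (zip Q hQ) s)) {Some b})"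
  define G where "G = tst ` (Qs \<times> Hs n ca \<times> (UNIV :: bool set))"
  define \<mu> where "\<mu> x = bind_pmf (v_init V) (exec V (zip (P x) (honest h (P x))))" for x
  have SS: "finite S" "card S \<le> 2 ^ cv" "set_pmf (v_init V) \<subseteq> S"
    "\<forall>s\<in>S. \<forall>x. valid_tok n x \<longrightarrow> set_pmf (v_tok V s x) \<subseteq> S"
    "\<forall>s\<in>S. \<forall>b. set_pmf (v_bit V s b) \<subseteq> S"
    using sch unfolding online_scheme_def by auto
  have finG: "finite G" unfolding G_def using finQ finH by auto
  have cG: "card G \<le> card Qs * (card (Hs n ca) * 2)"
    unfolding G_def by (rule order.trans[OF card_image_le]) (use finQ finH in \<open>simp_all add: card_cartesian_product\<close>)
  have bnd: "0 \<le> g s \<and> g s \<le> 1" if "g \<in> G" for g s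
    using that unfolding G_def tst_def by auto
  have "2 * real (card G) \<le> 2 ^ (L + 1)"
  proof -
    have "2 * card G \<le> 2 ^ (L + 1)" using cG cardb by (simp add: algebra_simps)
    then have "real (2 * card G) \<le> real (2 ^ (L + 1))" by linarith
    then show ?thesis by simp
  qed
  also have "\<dots> \<le> exp (real (L + 1))" by (rule two_pow_le_exp)
  finally have "2 * real (card G) * exp (- real k / 18) \<le> exp (real (L + 1)) * exp (- real k / 18)"
    by (rule mult_right_mono) simp
  also have "\<dots> = exp (real (L + 1) - real k / 18)" by (simp add: exp_add[symmetric])
  also have "\<dots> < 1" unfolding k_def by simp
  finally have small: "2 * real (card G) * exp (- real k / 18) < 1" .
  have supp: "set_pmf (\<mu> x) \<subseteq> S" if "x \<in> X" for x
  proof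
    fix t assume "t \<in> set_pmf (\<mu> x)"
    then obtain s where s: "s \<in> set_pmf (v_init V)" "t \<in> set_pmf (exec V (zip (P x) (honest h (P x))) s)"
      unfolding \<mu>_def by auto
    have "\<forall>p\<in>set (zip (P x) (honest h (P x))). valid_tok n (fst p)"
      using validP that by (auto dest: set_zip_leftD)
    then show "t \<in> S" using exec_in[OF _ SS(5) SS(4)] s SS(3) by blast
  qed
  have sep': "\<exists>g\<in>G. measure_pmf.expectation (\<mu> x) g - measure_pmf.expectation (\<mu> x') g \<ge> 1/3"
    if xx: "x \<in> X" "x' \<in> X" "x \<noteq> x'" for x x'
  proof -
    obtain Q where Q: "Q \<in> Qs" "promise n (P x @ Q)" "promise n (P x' @ Q)" "F (P x @ Q) \<noteq> F (P x' @ Q)"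
      using sep xx by blast
    define b where "b = F (P x @ Q)"
    define hQ where "hQ = map (\<lambda>i. h (take (Suc i) (P x @ Q))) [length (P x)..<length (P x) + length Q]"
    have hon: "honest h (P x @ Q) = honest h (P x) @ hQ" unfolding hQ_def by (rule honest_append)
    have sch1: "sum_list (map length (honest h (P x @ Q))) \<le> ca"
      "measure_pmf.prob (run_out V (P x @ Q) (honest h (P x @ Q))) {Some b} \<ge> 2/3"
      using sch Q(2) unfolding online_scheme_def b_def by auto
    have hQH: "hQ \<in> Hs n ca"
      using sch1(1) lenQ Q(1) unfolding Hs_def hon by (auto simp: hQ_def)
    have "length (honest h (P x') @ hQ) = length (P x' @ Q)" using lenQ Q(1) by (simp add: hQ_def)
    then have sch2: "measure_pmf.prob (run_out V (P x' @ Q) (honest h (P x') @ hQ)) (- {Some (F (P x' @ Q)), None}) \<le> 1/3"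
      using sch Q(3) unfolding online_scheme_def by blast
    have "measure_pmf.prob (run_out V (P x' @ Q) (honest h (P x') @ hQ)) {Some b}
       \<le> measure_pmf.prob (run_out V (P x' @ Q) (honest h (P x') @ hQ)) (- {Some (F (P x' @ Q)), None})"
      by (rule measure_pmf.finite_measure_mono) (use Q(4) in \<open>auto simp: b_def\<close>)
    also have "\<dots> \<le> 1/3" by (rule sch2)
    finally have low: "measure_pmf.prob (run_out V (P x' @ Q) (honest h (P x') @ hQ)) {Some b} \<le> 1/3" .
    define g where "g = tst (Q, hQ, b)"
    have gG: "g \<in> G" unfolding g_def G_def using Q(1) hQH by auto
    have e1: "measure_pmf.expectation (\<mu> x) g = measure_pmf.prob (run_out V (P x @ Q) (honest h (P x @ Q))) {Some b}"
      unfolding hon \<mu>_def g_def tst_def by (subst run_split) simp_all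
    have e2: "measure_pmf.expectation (\<mu> x') g = measure_pmf.prob (run_out V (P x' @ Q) (honest h (P x') @ hQ)) {Some b}"
      unfolding \<mu>_def g_def tst_def by (subst run_split) simp_all
    show ?thesis using gG e1 e2 sch1(2) low by force
  qed
  have "card X \<le> card S ^ k"
    by (rule core_count[where G=G and k=k and \<mu>=\<mu>, OF finG _ _ small SS(1) supp sep']) (auto simp: k_def bnd)
  also have "\<dots> \<le> (2 ^ cv) ^ k" by (rule power_mono[OF SS(2)]) simp
  finally show ?thesis by (simp add: k_def power_mult)
qed



fun ew :: "bool list \<Rightarrow> bool list" where
  "ew [] = [False]"
| "ew (b # w) = True # b # ew w"

definition enc :: "bool list list \<Rightarrow> bool list" where
  "enc hs = concat (map ew hs)"

lemma ew_app_inj: "ew w @ r = ew w' @ r' \<Longrightarrow> w = w' \<and> r = r'"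
proof (induction w arbitrary: w')
  case Nil then show ?case by (cases w') auto
next
  case (Cons b w) then show ?case by (cases w') auto
qed

lemma ew_ne: "ew w \<noteq> []" by (cases w) auto

lemma enc_inj: "enc hs = enc hs' \<Longrightarrow> hs = hs'"
proof (induction hs arbitrary: hs')
  case Nil then show ?case by (cases hs') (auto simp: enc_def ew_ne)
next
  case (Cons w hs)
  then show ?case
  proof (cases hs')
    case Nil then show ?thesis using Cons.prems by (auto simp: enc_def ew_ne)
  next
    case (Cons w' hs'')
    have "ew w @ enc hs = ew w' @ enc hs''" using Cons.prems Cons by (simp add: enc_def)
    then have "w = w'" "enc hs = enc hs''" using ew_app_inj by blast+
    then show ?thesis using Cons.IH Cons by simp
  qed
qed

lemma length_ew: "length (ew w) = 2 * length w + 1" by (induction w) auto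

lemma length_enc: "length (enc hs) = 2 * sum_list (map length hs) + length hs"
  by (induction hs) (auto simp: enc_def length_ew)

lemma card_lists_le: "card {xs :: bool list. length xs \<le> m} \<le> 2 ^ (2 * m)"
proof -
  have eq: "{xs :: bool list. length xs \<le> m} = (\<Union>j\<in>{..m}. {xs. set xs \<subseteq> UNIV \<and> length xs = j})" by auto
  have "card {xs :: bool list. length xs \<le> m} \<le> (\<Sum>j\<le>m. card {xs :: bool list. set xs \<subseteq> UNIV \<and> length xs = j})"
    unfolding eq by (rule card_UN_le) simp
  also have "\<dots> = (\<Sum>j\<le>m. 2 ^ j)"
    using card_lists_length_eq[of "UNIV :: bool set"] by simp
  also have "\<dots> \<le> (\<Sum>j\<le>m. (2::nat) ^ m)" by (rule sum_mono) simp
  also have "\<dots> = (m + 1) * 2 ^ m" by simp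
  also have "\<dots> \<le> 2 ^ m * 2 ^ m" by (rule mult_right_mono) (simp_all add: Suc_leI less_exp)
  also have "\<dots> = 2 ^ (2 * m)" by (simp add: power_add[symmetric] mult_2)
  finally show ?thesis .
qed

lemma Hs_bound: "finite (Hs n ca) \<and> card (Hs n ca) \<le> 2 ^ (2 * (2 * ca + n))"
proof -
  have inj: "inj_on enc (Hs n ca)" by (rule inj_onI) (rule enc_inj)
  have sub: "enc ` Hs n ca \<subseteq> {xs. length xs \<le> 2 * ca + n}"
    by (auto simp: Hs_def length_enc)
  have finL: "finite {xs :: bool list. length xs \<le> 2 * ca + n}"
    using finite_lists_length_le[of "UNIV :: bool set" "2 * ca + n"] by simp
  have fin: "finite (Hs n ca)"
    using finite_subset[OF sub finL] inj by (simp add: finite_image_iff)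
  have "card (Hs n ca) = card (enc ` Hs n ca)" by (simp add: card_image[OF inj])
  also have "\<dots> \<le> card {xs :: bool list. length xs \<le> 2 * ca + n}" by (rule card_mono[OF finL sub])
  also have "\<dots> \<le> 2 ^ (2 * (2 * ca + n))" by (rule card_lists_le)
  finally show ?thesis using fin by simp
qed



definition lst :: "'a set \<Rightarrow> 'a list" where
  "lst E = (SOME xs. set xs = E \<and> distinct xs)"

lemma lst: "finite E \<Longrightarrow> set (lst E) = E \<and> distinct (lst E)"
  unfolding lst_def by (rule someI_ex) (rule finite_distinct_list)

lemma set_lst[simp]: "finite E \<Longrightarrow> set (lst E) = E" using lst by blast
lemma distinct_lst[simp]: "finite E \<Longrightarrow> distinct (lst E)" using lst by blast
lemma length_lst: "finite E \<Longrightarrow> length (lst E) = card E"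
  using distinct_card[of "lst E"] by simp


definition cnt :: "tok list \<Rightarrow> tok \<Rightarrow> nat" where
  "cnt xs t = length (filter (\<lambda>x. x = t) xs)"

definition canon :: "tok \<Rightarrow> bool" where
  "canon t = (fst t < snd t)"

lemma tok_edge_canon_eq:
  assumes "canon x" "canon t" shows "tok_edge x = tok_edge t \<longleftrightarrow> x = t"
proof
  assume "tok_edge x = tok_edge t"
  then have "{fst x, snd x} = {fst t, snd t}" by (simp add: tok_edge_def)
  then have "(fst x = fst t \<and> snd x = snd t) \<or> (fst x = snd t \<and> snd x = fst t)"
    by (simp add: doubleton_eq_iff)
  then show "x = t" using assms unfolding canon_def by (cases x, cases t) auto
qed simp

lemma xor_edges_canon:
  assumes "\<forall>x\<in>set xs. canon x"
  shows "e \<in> xor_edges xs \<longleftrightarrow> (\<exists>t. canon t \<and> e = tok_edge t \<and> odd (cnt xs t))"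
proof
  assume "e \<in> xor_edges xs"
  then have o: "odd (length (filter (\<lambda>x. tok_edge x = e) xs))" by (simp add: xor_edges_def)
  then have "filter (\<lambda>x. tok_edge x = e) xs \<noteq> []" by auto
  then obtain t where t: "t \<in> set xs" "tok_edge t = e" by (auto simp: filter_empty_conv)
  have "filter (\<lambda>x. tok_edge x = e) xs = filter (\<lambda>x. x = t) xs"
  proof (rule filter_cong)
    fix x assume "x \<in> set xs"
    then show "(tok_edge x = e) = (x = t)" using assms t tok_edge_canon_eq[of x t] by auto
  qed simp
  then show "\<exists>t. canon t \<and> e = tok_edge t \<and> odd (cnt xs t)"
    using o t assms unfolding cnt_def by (intro exI[of _ t]) auto
next
  assume "\<exists>t. canon t \<and> e = tok_edge t \<and> odd (cnt xs t)"
  then obtain t where t: "canon t" "e = tok_edge t" "odd (cnt xs t)" by blast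
  have "filter (\<lambda>x. tok_edge x = e) xs = filter (\<lambda>x. x = t) xs"
    by (rule filter_cong) (use assms t tok_edge_canon_eq in auto)
  then show "e \<in> xor_edges xs" using t by (simp add: xor_edges_def cnt_def)
qed

lemma cnt_append: "cnt (xs @ ys) t = cnt xs t + cnt ys t" by (simp add: cnt_def)

lemma cnt_sorted: "finite E \<Longrightarrow> cnt (lst E) t = (if t \<in> E then 1 else 0)"
proof -
  assume f: "finite E"
  have "{x. x = t} \<inter> E = (if t \<in> E then {t} else {})" by auto
  then show ?thesis unfolding cnt_def using f by (subst distinct_length_filter) auto
qed

lemma cnt_replicate: "cnt (replicate r s) t = (if t = s then r else 0)"
  by (induction r) (auto simp: cnt_def)

definition Qf :: "nat \<Rightarrow> nat \<Rightarrow> nat set \<Rightarrow> tok list" where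
  "Qf n i T = lst (Pair i ` T) @ replicate (n - card T) (0, i)"

definition stream :: "tok set \<Rightarrow> nat \<Rightarrow> nat \<Rightarrow> nat set \<Rightarrow> tok list" where
  "stream E n i T = lst E @ Qf n i T"

lemma odd_cnt_stream:
  assumes "finite E" "finite T" "odd (n - card T)"
  shows "odd (cnt (stream E n i T) t) \<longleftrightarrow> ((t \<in> E) \<noteq> ((t \<in> Pair i ` T) \<noteq> (t = (0, i))))"
  using assms by (simp add: stream_def Qf_def cnt_append cnt_sorted cnt_replicate)

lemma length_Qf: "card T \<le> n \<Longrightarrow> finite T \<Longrightarrow> length (Qf n i T) = n"
proof -
  assume "card T \<le> n" "finite T"
  moreover have "card (Pair i ` T) = card T" by (rule card_image) (simp add: inj_on_def)
  ultimately show ?thesis by (simp add: Qf_def length_lst)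
qed

lemma set_Qf: "finite T \<Longrightarrow> set (Qf n i T) \<subseteq> Pair i ` T \<union> {(0, i)}"
  by (auto simp: Qf_def)

lemma stream_props:
  assumes E: "finite E" "\<forall>t\<in>E. canon t \<and> snd t \<le> n"
    and T: "finite T" "\<forall>v\<in>T. i < v \<and> v \<le> n" "card T \<le> n"
    and i: "1 \<le> i" "i \<le> n"
  shows "promise n (stream E n i T)" "\<forall>t\<in>set (stream E n i T). canon t"
    "\<forall>t\<in>set (lst E). valid_tok n t"
proof -
  have canQ: "\<forall>t\<in>set (Qf n i T). canon t \<and> snd t \<le> n" using set_Qf[OF T(1), of n i] T i
    by (auto simp: canon_def)
  have allc: "\<forall>t\<in>set (stream E n i T). canon t \<and> snd t \<le> n"
    using canQ E by (auto simp: stream_def)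
  then show "\<forall>t\<in>set (stream E n i T). canon t" by blast
  have vE: "\<forall>t\<in>set (lst E). valid_tok n t" using E by (auto simp: valid_tok_def canon_def)
  then show "\<forall>t\<in>set (lst E). valid_tok n t" .
  have valid: "\<forall>t\<in>set (stream E n i T). valid_tok n t" using allc by (auto simp: valid_tok_def canon_def)
  have lq: "length (Qf n i T) = n" using length_Qf T by simp
  have tk: "take (length (stream E n i T) - n) (stream E n i T) = lst E"
    and dr: "drop (length (stream E n i T) - n) (stream E n i T) = Qf n i T"
    using lq by (simp_all add: stream_def)
  have inj: "inj_on tok_edge E" using E tok_edge_canon_eq by (auto intro: inj_onI)
  have dist: "distinct (map tok_edge (lst E))"
    using inj E by (simp add: distinct_map)
  have w: "\<forall>x\<in>set (Qf n i T). i \<in> tok_edge x" using set_Qf[OF T(1), of n i] by (auto simp: tok_edge_def)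
  show "promise n (stream E n i T)"
    unfolding promise_def using valid lq dist w i tk dr by (auto simp: stream_def)
qed



definition aa :: "nat \<Rightarrow> nat" where "aa n = (n - 1) div 2"
definition AA :: "nat \<Rightarrow> nat set" where "AA n = {1..aa n}"
definition BB :: "nat \<Rightarrow> nat set" where "BB n = {aa n + 1..2 * aa n}"
definition zz :: "nat \<Rightarrow> nat" where "zz n = 2 * aa n + 1"
definition Bs :: "nat \<Rightarrow> nat set" where "Bs n = {aa n + 1..zz n}"
definition rowf :: "nat \<Rightarrow> nat set \<Rightarrow> nat set" where
  "rowf n R = R \<union> (if even (card R + n) then {zz n} else {})"
definition EPc :: "nat \<Rightarrow> (nat \<Rightarrow> nat set) \<Rightarrow> tok set" where
  "EPc n x = Pair 0 ` {1..n} \<union> Sigma (AA n) (\<lambda>i. rowf n (x i))"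
definition EPb :: "nat \<Rightarrow> (nat \<Rightarrow> nat set) \<Rightarrow> tok set" where
  "EPb n x = Pair 0 ` Bs n \<union> Sigma (AA n) (\<lambda>i. rowf n (x i))"
definition Xs :: "nat \<Rightarrow> (nat \<Rightarrow> nat set) set" where
  "Xs n = PiE (AA n) (\<lambda>_. Pow (BB n))"
definition QQ :: "nat \<Rightarrow> tok list set" where
  "QQ n = (\<lambda>(i, R). Qf n i (rowf n R)) ` (AA n \<times> Pow (BB n))"

lemma zz_le: "n \<ge> 1 \<Longrightarrow> zz n \<le> n" unfolding zz_def aa_def by linarith


lemma odd_sub_aux: "(c::nat) \<le> n \<Longrightarrow> odd (c + n) \<Longrightarrow> odd (n - c)"
  by (metis add_diff_cancel_left' le_add_diff_inverse even_add)

lemma zz_notin_BB: "zz n \<notin> BB n" by (simp add: BB_def zz_def)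

lemma rowf_sub: "R \<subseteq> BB n \<Longrightarrow> rowf n R \<subseteq> Bs n"
proof -
  assume R: "R \<subseteq> BB n"
  have "BB n \<subseteq> Bs n" "zz n \<in> Bs n" by (auto simp: BB_def Bs_def zz_def)
  then show ?thesis using R unfolding rowf_def by auto
qed

lemma rowf_props:
  assumes n: "n \<ge> 3" and R: "R \<subseteq> BB n"
  shows "finite (rowf n R)" "rowf n R \<subseteq> Bs n" "odd (n - card (rowf n R))" "card (rowf n R) \<le> n"
proof -
  have fR: "finite R" using R finite_subset[of R "BB n"] by (simp add: BB_def)
  show f: "finite (rowf n R)" using fR by (simp add: rowf_def)
  show sub: "rowf n R \<subseteq> Bs n" using R by (rule rowf_sub)
  have "card (rowf n R) \<le> card (Bs n)" by (rule card_mono) (use sub in \<open>simp_all add: Bs_def\<close>)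
  also have "card (Bs n) = aa n + 1" by (simp add: Bs_def zz_def)
  also have "aa n + 1 \<le> n" using n by (simp add: aa_def)
  finally show c: "card (rowf n R) \<le> n" .
  have zn: "zz n \<notin> R" using R zz_notin_BB by blast
  have "odd (card (rowf n R) + n)"
  proof (cases "even (card R + n)")
    case True
    then have "rowf n R = insert (zz n) R" by (simp add: rowf_def)
    then have "card (rowf n R) = card R + 1" using zn fR by simp
    then show ?thesis using True by simp
  next
    case False then show ?thesis by (simp add: rowf_def)
  qed
  then show "odd (n - card (rowf n R))" using c odd_sub_aux by blast
qed

lemma rowf_int: "S \<subseteq> BB n \<Longrightarrow> rowf n S \<inter> BB n = S"
proof -
  assume S: "S \<subseteq> BB n"
  have "rowf n S \<subseteq> insert (zz n) S" unfolding rowf_def by (simp add: subset_insertI)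
  moreover have "S \<subseteq> rowf n S" unfolding rowf_def by (rule Un_upper1)
  ultimately
  show ?thesis using S zz_notin_BB by blast
qed

lemma rowf_inj:
  assumes "R \<subseteq> BB n" "R' \<subseteq> BB n" "rowf n R = rowf n R'" shows "R = R'"
proof -
  have "R = rowf n R \<inter> BB n" using rowf_int[OF assms(1)] by (rule sym)
  also have "\<dots> = rowf n R' \<inter> BB n" using assms(3) by (rule arg_cong)
  also have "\<dots> = R'" by (rule rowf_int[OF assms(2)])
  finally show ?thesis .
qed

lemma AA_bnd: "i \<in> AA n \<Longrightarrow> 1 \<le> i \<and> i \<le> aa n" by (simp add: AA_def)
lemma Bs_bnd: "v \<in> Bs n \<Longrightarrow> aa n < v \<and> v \<le> zz n" by (auto simp: Bs_def)

lemma Xs_row: "x \<in> Xs n \<Longrightarrow> j \<in> AA n \<Longrightarrow> x j \<subseteq> BB n"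
  by (auto simp: Xs_def PiE_def Pi_def)

lemma mem_EPc: "(p, q) \<in> EPc n x \<longleftrightarrow> (p = 0 \<and> 1 \<le> q \<and> q \<le> n) \<or> (p \<in> AA n \<and> q \<in> rowf n (x p))"
  by (auto simp: EPc_def)

lemma mem_EPb: "(p, q) \<in> EPb n x \<longleftrightarrow> (p = 0 \<and> q \<in> Bs n) \<or> (p \<in> AA n \<and> q \<in> rowf n (x p))"
  by (auto simp: EPb_def)

lemma mem_PairT: "(p, q) \<in> Pair i ` T \<longleftrightarrow> p = i \<and> q \<in> T" by auto

lemma EP_ok:
  assumes n: "n \<ge> 3" and x: "x \<in> Xs n"
  shows "finite (EPc n x) \<and> (\<forall>t\<in>EPc n x. canon t \<and> snd t \<le> n)"
    "finite (EPb n x) \<and> (\<forall>t\<in>EPb n x. canon t \<and> snd t \<le> n)"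
proof -
  have rows: "\<forall>j\<in>AA n. finite (rowf n (x j)) \<and> rowf n (x j) \<subseteq> Bs n"
    using rowf_props(1,2)[OF n Xs_row[OF x]] by blast
  have finA: "finite (AA n)" by (simp add: AA_def)
  have finS: "finite (Sigma (AA n) (\<lambda>i. rowf n (x i)))" using finA rows by blast
  have zn: "zz n \<le> n" using zz_le n by simp
  have cS: "canon t \<and> snd t \<le> n" if tS: "t \<in> Sigma (AA n) (\<lambda>i. rowf n (x i))" for t
  proof -
    obtain p q where t: "t = (p, q)" "p \<in> AA n" "q \<in> rowf n (x p)" using tS by blast
    have "q \<in> Bs n" using rows t by blast
    then show ?thesis using AA_bnd[OF t(2)] Bs_bnd[of q n] zn t(1) by (simp add: canon_def)
  qed
  show "finite (EPc n x) \<and> (\<forall>t\<in>EPc n x. canon t \<and> snd t \<le> n)"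
    using finS cS unfolding EPc_def by (auto simp: canon_def)
  have "\<forall>v\<in>Bs n. 0 < v \<and> v \<le> n" using Bs_bnd zn by fastforce
  then show "finite (EPb n x) \<and> (\<forall>t\<in>EPb n x. canon t \<and> snd t \<le> n)"
    using finS cS unfolding EPb_def by (auto simp: canon_def Bs_def)
qed

context
  fixes n :: nat and x :: "nat \<Rightarrow> nat set" and i :: nat and R :: "nat set"
  assumes n3: "n \<ge> 3" and xX: "x \<in> Xs n" and iA: "i \<in> AA n" and RB: "R \<subseteq> BB n"
begin

lemma T_props: "finite (rowf n R)" "rowf n R \<subseteq> Bs n" "odd (n - card (rowf n R))" "card (rowf n R) \<le> n"
  using rowf_props[OF n3 RB] by auto

lemma r_sub: "rowf n (x i) \<subseteq> Bs n" using rowf_props(2)[OF n3 Xs_row[OF xX iA]] .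

lemma i_bnd: "1 \<le> i" "i \<le> aa n" "i \<le> n" using AA_bnd[OF iA] n3 by (auto simp: aa_def)

lemma zn: "zz n \<le> n" using zz_le n3 by simp

lemma T_bnd: "\<forall>v\<in>rowf n R. i < v \<and> v \<le> n"
  using T_props(2) Bs_bnd i_bnd zn by fastforce

lemma i_notin_Bs: "i \<notin> Bs n" using Bs_bnd i_bnd by fastforce
lemma z_notin_Bs: "0 \<notin> Bs n" using Bs_bnd by fastforce

lemma streamc_props:
  "promise n (stream (EPc n x) n i (rowf n R))" "\<forall>t\<in>set (stream (EPc n x) n i (rowf n R)). canon t"
  "\<forall>t\<in>set (lst (EPc n x)). valid_tok n t"
proof -
  have e: "finite (EPc n x)" "\<forall>t\<in>EPc n x. canon t \<and> snd t \<le> n" using EP_ok(1)[OF n3 xX] by blast+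
  note sp = stream_props[OF e T_props(1) T_bnd T_props(4) i_bnd(1) i_bnd(3)]
  show "promise n (stream (EPc n x) n i (rowf n R))" by (rule sp(1))
  show "\<forall>t\<in>set (stream (EPc n x) n i (rowf n R)). canon t" by (rule sp(2))
  show "\<forall>t\<in>set (lst (EPc n x)). valid_tok n t" by (rule sp(3))
qed

lemma streamb_props:
  "promise n (stream (EPb n x) n i (rowf n R))" "\<forall>t\<in>set (stream (EPb n x) n i (rowf n R)). canon t"
  "\<forall>t\<in>set (lst (EPb n x)). valid_tok n t"
proof -
  have e: "finite (EPb n x)" "\<forall>t\<in>EPb n x. canon t \<and> snd t \<le> n" using EP_ok(2)[OF n3 xX] by blast+
  note sp = stream_props[OF e T_props(1) T_bnd T_props(4) i_bnd(1) i_bnd(3)]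
  show "promise n (stream (EPb n x) n i (rowf n R))" by (rule sp(1))
  show "\<forall>t\<in>set (stream (EPb n x) n i (rowf n R)). canon t" by (rule sp(2))
  show "\<forall>t\<in>set (lst (EPb n x)). valid_tok n t" by (rule sp(3))
qed

lemma oddc: "odd (cnt (stream (EPc n x) n i (rowf n R)) (p, q)) \<longleftrightarrow>
   (((p = 0 \<and> 1 \<le> q \<and> q \<le> n) \<or> (p \<in> AA n \<and> q \<in> rowf n (x p))) \<noteq> ((p = i \<and> q \<in> rowf n R) \<noteq> (p = 0 \<and> q = i)))"
proof -
  have f: "finite (EPc n x)" using EP_ok(1)[OF n3 xX] by blast
  show ?thesis using odd_cnt_stream[OF f T_props(1) T_props(3), of i "(p, q)"]
    by (simp only: mem_EPc mem_PairT prod.inject)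
qed

lemma oddb: "odd (cnt (stream (EPb n x) n i (rowf n R)) (p, q)) \<longleftrightarrow>
   (((p = 0 \<and> q \<in> Bs n) \<or> (p \<in> AA n \<and> q \<in> rowf n (x p))) \<noteq> ((p = i \<and> q \<in> rowf n R) \<noteq> (p = 0 \<and> q = i)))"
proof -
  have f: "finite (EPb n x)" using EP_ok(2)[OF n3 xX] by blast
  show ?thesis using odd_cnt_stream[OF f T_props(1) T_props(3), of i "(p, q)"]
    by (simp only: mem_EPb mem_PairT prod.inject)
qed

lemma edge_in:
  assumes "\<forall>t\<in>set xs. canon t" "p < q" "odd (cnt xs (p, q))"
  shows "{p, q} \<in> xor_edges xs"
  using xor_edges_canon[OF assms(1), of "{p, q}"] assms(2,3) by (auto simp: canon_def tok_edge_def)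

lemma edge_out:
  assumes "\<forall>t\<in>set xs. canon t" "{u, v} \<in> xor_edges xs"
  shows "\<exists>p q. p < q \<and> odd (cnt xs (p, q)) \<and> ((u = p \<and> v = q) \<or> (u = q \<and> v = p))"
proof -
  obtain t where t: "canon t" "{u, v} = tok_edge t" "odd (cnt xs t)"
    using xor_edges_canon[OF assms(1), of "{u, v}"] assms(2) by blast
  obtain p q where pq: "t = (p, q)" by (cases t)
  have "{u, v} = {p, q}" using t(2) pq by (simp add: tok_edge_def)
  then have "(u = p \<and> v = q) \<or> (u = q \<and> v = p)" by (simp add: doubleton_eq_iff)
  then show ?thesis using t pq by (auto simp: canon_def)
qed


lemma conn_iff: "connected_xor n (stream (EPc n x) n i (rowf n R)) \<longleftrightarrow> rowf n (x i) \<noteq> rowf n R"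
proof -
  define str where "str = stream (EPc n x) n i (rowf n R)"
  define Rel where "Rel = {(a, b). a \<le> n \<and> b \<le> n \<and> {a, b} \<in> xor_edges str}"
  have can: "\<forall>t\<in>set str. canon t" unfolding str_def by (rule streamc_props(2))
  have oc: "odd (cnt str (p, q)) \<longleftrightarrow>
   (((p = 0 \<and> 1 \<le> q \<and> q \<le> n) \<or> (p \<in> AA n \<and> q \<in> rowf n (x p))) \<noteq> ((p = i \<and> q \<in> rowf n R) \<noteq> (p = 0 \<and> q = i)))" for p q
    unfolding str_def by (rule oddc)
  have cx: "connected_xor n str \<longleftrightarrow> (\<forall>u\<le>n. \<forall>v\<le>n. (u, v) \<in> Rel\<^sup>*)"
    unfolding connected_xor_def Rel_def by simp
  show ?thesis
  proof (cases "rowf n (x i) = rowf n R")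
    case True
    have noe: "{i, u} \<notin> xor_edges str" for u
    proof
      assume "{i, u} \<in> xor_edges str"
      then obtain p q where pq: "p < q" "odd (cnt str (p, q))" "(i = p \<and> u = q) \<or> (i = q \<and> u = p)"
        using edge_out[OF can] by blast
      show False
      proof (cases "i = p")
        case ip: True
        have "p \<noteq> 0" using ip i_bnd by simp
        then have "odd (cnt str (p, q)) \<longleftrightarrow> (q \<in> rowf n (x i)) \<noteq> (q \<in> rowf n R)"
          using oc[of p q] ip iA by auto
        then show False using pq(2) True by simp
      next
        case False
        then have iq: "i = q" using pq(3) by blast
        have "i \<notin> rowf n (x p)" if "p \<in> AA n"
          using rowf_props(2)[OF n3 Xs_row[OF xX that]] i_notin_Bs by blast
        then have "odd (cnt str (p, q)) \<longleftrightarrow> ((p = 0) \<noteq> (p = 0))"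
          using oc[of p q] iq pq(1) i_bnd by auto
        then show False using pq(2) by simp
      qed
    qed
    have reach: "(i, y) \<in> Rel\<^sup>* \<Longrightarrow> y = i" for y
    proof (induction rule: rtrancl_induct)
      case base then show ?case by simp
    next
      case (step y z)
      then show ?case using noe unfolding Rel_def by auto
    qed
    have "(i, 0) \<notin> Rel\<^sup>*" using reach[of 0] i_bnd by auto
    then have "\<not> connected_xor n str" using cx i_bnd by auto
    then show ?thesis using True str_def by simp
  next
    case False
    then obtain v0 where v0: "(v0 \<in> rowf n (x i)) \<noteq> (v0 \<in> rowf n R)" by blast
    have v0B: "v0 \<in> Bs n" using v0 r_sub T_props(2) by blast
    have v0b: "i < v0" "v0 \<le> n" "0 < v0" using Bs_bnd[OF v0B] i_bnd zn by auto
    have e0: "(0, u) \<in> Rel \<and> (u, 0) \<in> Rel" if "1 \<le> u" "u \<le> n" "u \<noteq> i" for u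
    proof -
      have "odd (cnt str (0, u))" using oc[of 0 u] that i_bnd by auto
      then have "{0, u} \<in> xor_edges str" using edge_in[OF can, of 0 u] that by simp
      then show ?thesis unfolding Rel_def using that by (auto simp: insert_commute)
    qed
    have ei: "(i, v0) \<in> Rel \<and> (v0, i) \<in> Rel"
    proof -
      have "odd (cnt str (i, v0))" using oc[of i v0] v0 iA i_bnd by auto
      then have "{i, v0} \<in> xor_edges str" using edge_in[OF can, of i v0] v0b by simp
      then show ?thesis unfolding Rel_def using v0b i_bnd by (auto simp: insert_commute)
    qed
    have r0: "(0, u) \<in> Rel\<^sup>* \<and> (u, 0) \<in> Rel\<^sup>*" if "u \<le> n" for u
    proof (cases "u = 0")
      case True then show ?thesis by simp
    next
      case u0: False
      show ?thesis
      proof (cases "u = i")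
        case True
        have a: "(0, v0) \<in> Rel \<and> (v0, 0) \<in> Rel" using e0[of v0] v0b by simp
        have "(0, i) \<in> Rel\<^sup>*" using a ei by (meson rtrancl.rtrancl_into_rtrancl r_into_rtrancl)
        moreover have "(i, 0) \<in> Rel\<^sup>*" using a ei by (meson rtrancl.rtrancl_into_rtrancl r_into_rtrancl)
        ultimately show ?thesis using True by simp
      next
        case False
        then show ?thesis using e0[of u] u0 that by auto
      qed
    qed
    have "connected_xor n str" unfolding cx
      using r0 by (meson rtrancl_trans)
    then show ?thesis using False str_def by simp
  qed
qed

lemma bip_iff: "bipartite_xor n (stream (EPb n x) n i (rowf n R)) \<longleftrightarrow> rowf n (x i) = rowf n R"
proof -
  define str where "str = stream (EPb n x) n i (rowf n R)"
  have can: "\<forall>t\<in>set str. canon t" unfolding str_def by (rule streamb_props(2))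
  have oc: "odd (cnt str (p, q)) \<longleftrightarrow>
   (((p = 0 \<and> q \<in> Bs n) \<or> (p \<in> AA n \<and> q \<in> rowf n (x p))) \<noteq> ((p = i \<and> q \<in> rowf n R) \<noteq> (p = 0 \<and> q = i)))" for p q
    unfolding str_def by (rule oddb)
  show ?thesis
  proof (cases "rowf n (x i) = rowf n R")
    case True
    define c where "c u = (u \<in> Bs n \<or> u = i)" for u
    have cpq: "c p \<noteq> c q" if pq: "p < q" "odd (cnt str (p, q))" for p q
    proof (cases "p = i")
      case ip: True
      have "p \<noteq> 0" using ip i_bnd by simp
      then have "odd (cnt str (p, q)) \<longleftrightarrow> (q \<in> rowf n (x i)) \<noteq> (q \<in> rowf n R)"
        using oc[of p q] ip iA by auto
      then show ?thesis using pq(2) True by simp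
    next
      case pi: False
      then have o: "((p = 0 \<and> q \<in> Bs n) \<or> (p \<in> AA n \<and> q \<in> rowf n (x p))) \<noteq> (p = 0 \<and> q = i)"
        using oc[of p q] pq(2) by auto
      show ?thesis
      proof (cases "p = 0 \<and> q = i")
        case True
        then show ?thesis using z_notin_Bs i_bnd by (auto simp: c_def)
      next
        case False
        then have "(p = 0 \<and> q \<in> Bs n) \<or> (p \<in> AA n \<and> q \<in> rowf n (x p))" using o by blast
        then show ?thesis
        proof
          assume "p = 0 \<and> q \<in> Bs n"
          then show ?thesis using z_notin_Bs i_bnd by (auto simp: c_def)
        next
          assume a: "p \<in> AA n \<and> q \<in> rowf n (x p)"
          then have "q \<in> Bs n" using rowf_props(2)[OF n3 Xs_row[OF xX]] by blast
          moreover have "p \<notin> Bs n" using a AA_bnd Bs_bnd by fastforce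
          ultimately show ?thesis using pi by (auto simp: c_def)
        qed
      qed
    qed
    have "bipartite_xor n str" unfolding bipartite_xor_def
    proof (intro exI allI impI)
      fix u v assume "{u, v} \<in> xor_edges str"
      then obtain p q where pq: "p < q" "odd (cnt str (p, q))" "(u = p \<and> v = q) \<or> (u = q \<and> v = p)"
        using edge_out[OF can] by blast
      then show "c u \<noteq> c v" using cpq[OF pq(1,2)] by auto
    qed
    then show ?thesis using True str_def by simp
  next
    case False
    then obtain v0 where v0: "(v0 \<in> rowf n (x i)) \<noteq> (v0 \<in> rowf n R)" by blast
    have v0B: "v0 \<in> Bs n" using v0 r_sub T_props(2) by blast
    have v0b: "i < v0" "v0 \<le> n" "0 < v0" using Bs_bnd[OF v0B] i_bnd zn by auto
    have e1: "{i, v0} \<in> xor_edges str"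
    proof -
      have "odd (cnt str (i, v0))" using oc[of i v0] v0 iA i_bnd by auto
      then show ?thesis using edge_in[OF can, of i v0] v0b by simp
    qed
    have e2: "{0, v0} \<in> xor_edges str"
    proof -
      have "odd (cnt str (0, v0))" using oc[of 0 v0] v0B v0b i_bnd by auto
      then show ?thesis using edge_in[OF can, of 0 v0] v0b by simp
    qed
    have e3: "{0, i} \<in> xor_edges str"
    proof -
      have "0 \<notin> AA n" by (simp add: AA_def)
      then have "odd (cnt str (0, i))" using oc[of 0 i] i_notin_Bs i_bnd by auto
      then show ?thesis using edge_in[OF can, of 0 i] i_bnd by simp
    qed
    have "\<not> bipartite_xor n str"
    proof
      assume "bipartite_xor n str"
      then obtain c :: "nat \<Rightarrow> bool" where c: "\<forall>u v. {u, v} \<in> xor_edges str \<longrightarrow> c u \<noteq> c v"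
        unfolding bipartite_xor_def by blast
      have "c i \<noteq> c v0" "c 0 \<noteq> c v0" "c 0 \<noteq> c i" using c e1 e2 e3 by blast+
      then show False by blast
    qed
    then show ?thesis using False str_def by simp
  qed
qed

end



lemma card_Xs: "card (Xs n) = 2 ^ (aa n * aa n)"
proof -
  have "card (Xs n) = (\<Prod>i\<in>AA n. card (Pow (BB n)))" unfolding Xs_def
    by (rule card_PiE) (simp add: AA_def)
  also have "\<dots> = (2 ^ aa n) ^ aa n" by (simp add: AA_def BB_def card_Pow)
  finally show ?thesis by (simp add: power_mult)
qed

lemma fin_Xs: "finite (Xs n)" unfolding Xs_def by (rule finite_PiE) (auto simp: AA_def BB_def)

lemma card_QQ: "card (QQ n) \<le> 2 ^ (2 * aa n)"
proof -
  have "card (QQ n) \<le> card (AA n \<times> Pow (BB n))" unfolding QQ_def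
    by (rule card_image_le) (simp add: AA_def BB_def)
  also have "\<dots> = aa n * 2 ^ aa n" by (simp add: card_cartesian_product AA_def BB_def card_Pow)
  also have "\<dots> \<le> 2 ^ aa n * 2 ^ aa n" by (rule mult_right_mono) (simp_all add: less_imp_le less_exp)
  also have "\<dots> = 2 ^ (2 * aa n)" by (simp add: power_add[symmetric] mult_2)
  finally show ?thesis .
qed

lemma fin_QQ: "finite (QQ n)" unfolding QQ_def by (rule finite_imageI) (simp add: AA_def BB_def)

lemma len_QQ: "n \<ge> 3 \<Longrightarrow> \<forall>Q\<in>QQ n. length Q = n"
proof
  fix Q assume n: "n \<ge> 3" and "Q \<in> QQ n"
  then obtain i R where Q: "Q = Qf n i (rowf n R)" "R \<subseteq> BB n" unfolding QQ_def by auto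
  show "length Q = n" unfolding Q(1) using rowf_props[OF n Q(2)] length_Qf by blast
qed

lemma Xs_diff: "x \<in> Xs n \<Longrightarrow> x' \<in> Xs n \<Longrightarrow> x \<noteq> x' \<Longrightarrow> \<exists>i\<in>AA n. x i \<noteq> x' i"
  unfolding Xs_def using PiE_ext by blast

lemma main_nat:
  assumes n: "n \<ge> 4" and F: "F = connected_xor n \<or> F = bipartite_xor n"
    and sch: "online_scheme n F S cv ca h V"
  shows "aa n * aa n \<le> cv * (18 * ((1 + 2 * aa n + 2 * (2 * ca + n)) + 2))"
proof -
  have n3: "n \<ge> 3" using n by simp
  define L where "L = 1 + 2 * aa n + 2 * (2 * ca + n)"
  define EP where "EP = (if F = connected_xor n then EPc n else EPb n)"
  have HB: "finite (Hs n ca)" "card (Hs n ca) \<le> 2 ^ (2 * (2 * ca + n))" using Hs_bound by auto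
  have cardb: "2 * card (QQ n) * card (Hs n ca) \<le> 2 ^ L"
  proof -
    have "2 * card (QQ n) * card (Hs n ca) \<le> 2 * 2 ^ (2 * aa n) * 2 ^ (2 * (2 * ca + n))"
      using card_QQ HB(2) by (intro mult_mono) simp_all
    also have "\<dots> = 2 ^ L" by (simp add: L_def power_add)
    finally show ?thesis .
  qed
  have validP: "\<forall>x\<in>Xs n. \<forall>t\<in>set (lst (EP x)). valid_tok n t"
  proof (intro ballI)
    fix x t assume x: "x \<in> Xs n" and t: "t \<in> set (lst (EP x))"
    have "finite (EP x) \<and> (\<forall>t\<in>EP x. canon t \<and> snd t \<le> n)"
      using EP_ok[OF n3 x] by (simp add: EP_def)
    then show "valid_tok n t" using t by (auto simp: valid_tok_def canon_def)
  qed
  have sep: "\<forall>x\<in>Xs n. \<forall>x'\<in>Xs n. x \<noteq> x' \<longrightarrow> (\<exists>Q\<in>QQ n. promise n (lst (EP x) @ Q) \<and>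
          promise n (lst (EP x') @ Q) \<and> F (lst (EP x) @ Q) \<noteq> F (lst (EP x') @ Q))"
  proof (intro ballI impI)
    fix x x' assume x: "x \<in> Xs n" and x': "x' \<in> Xs n" and ne: "x \<noteq> x'"
    obtain i where i: "i \<in> AA n" "x i \<noteq> x' i" using Xs_diff[OF x x' ne] by blast
    have R: "x i \<subseteq> BB n" using Xs_row[OF x i(1)] .
    have R': "x' i \<subseteq> BB n" using Xs_row[OF x' i(1)] .
    have rne: "rowf n (x' i) \<noteq> rowf n (x i)" using rowf_inj[OF R' R] i(2) by metis
    define Q where "Q = Qf n i (rowf n (x i))"
    have QQ: "Q \<in> QQ n" unfolding Q_def QQ_def using i(1) R by auto
    have s1: "lst (EP x) @ Q = stream (EP x) n i (rowf n (x i))" by (simp add: Q_def stream_def)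
    have s2: "lst (EP x') @ Q = stream (EP x') n i (rowf n (x i))" by (simp add: Q_def stream_def)
    show "\<exists>Q\<in>QQ n. promise n (lst (EP x) @ Q) \<and> promise n (lst (EP x') @ Q) \<and> F (lst (EP x) @ Q) \<noteq> F (lst (EP x') @ Q)"
    proof (rule bexI[OF _ QQ])
      show "promise n (lst (EP x) @ Q) \<and> promise n (lst (EP x') @ Q) \<and> F (lst (EP x) @ Q) \<noteq> F (lst (EP x') @ Q)"
      proof (cases "F = connected_xor n")
        case True
        have "EP = EPc n" using True by (simp add: EP_def)
        then show ?thesis unfolding s1 s2 using True
            streamc_props(1)[OF n3 x i(1) R] streamc_props(1)[OF n3 x' i(1) R]
            conn_iff[OF n3 x i(1) R] conn_iff[OF n3 x' i(1) R] rne by simp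
      next
        case False
        then have Fb: "F = bipartite_xor n" using F by simp
        have "EP = EPb n" using False by (simp add: EP_def)
        then show ?thesis unfolding s1 s2 using Fb
            streamb_props(1)[OF n3 x i(1) R] streamb_props(1)[OF n3 x' i(1) R]
            bip_iff[OF n3 x i(1) R] bip_iff[OF n3 x' i(1) R] rne by simp
      qed
    qed
  qed
  have "card (Xs n) \<le> 2 ^ (cv * (18 * (L + 2)))"
    by (rule scheme_bound[OF sch fin_Xs fin_QQ len_QQ[OF n3] HB(1) validP sep cardb])
  then have "2 ^ (aa n * aa n) \<le> (2::nat) ^ (cv * (18 * (L + 2)))" using card_Xs by simp
  then have "aa n * aa n \<le> cv * (18 * (L + 2))" by simp
  then show ?thesis by (simp add: L_def)
qed

lemma main_nat2:
  assumes n: "n \<ge> 4" and F: "F = connected_xor n \<or> F = bipartite_xor n"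
    and sch: "online_scheme n F S cv ca h V"
  shows "n * n \<le> 1152 * ((ca + n) * cv)"
proof -
  have m: "aa n * aa n \<le> cv * (18 * ((1 + 2 * aa n + 2 * (2 * ca + n)) + 2))" by (rule main_nat[OF n F sch])
  have a1: "n \<le> 4 * aa n" using n unfolding aa_def by linarith
  have a2: "2 * aa n \<le> n" unfolding aa_def by linarith
  have e: "18 * ((1 + 2 * aa n + 2 * (2 * ca + n)) + 2) = 54 + 36 * aa n + 72 * ca + 36 * n" by simp
  have "18 * ((1 + 2 * aa n + 2 * (2 * ca + n)) + 2) \<le> 72 * (ca + n)" unfolding e distrib_left using a2 n by linarith
  then have "cv * (18 * ((1 + 2 * aa n + 2 * (2 * ca + n)) + 2)) \<le> cv * (72 * (ca + n))"
    by (rule mult_left_mono) simp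
  also have "cv * (72 * (ca + n)) = 72 * ((ca + n) * cv)" by simp
  finally have m2: "aa n * aa n \<le> 72 * ((ca + n) * cv)" using m by (rule order.trans[rotated])
  have "n * n \<le> (4 * aa n) * (4 * aa n)" by (rule mult_mono[OF a1 a1]) simp_all
  also have "\<dots> = 16 * (aa n * aa n)" by simp
  also have "\<dots> \<le> 16 * (72 * ((ca + n) * cv))" using m2 by (rule mult_left_mono) simp
  finally show ?thesis by simp
qed

theorem corollary4p2:
  shows "\<exists>C>0. \<exists>N. \<forall>n\<ge>N. \<forall>F S cv ca h V.
     (F = connected_xor n \<or> F = bipartite_xor n) \<longrightarrow>
     online_scheme n F S cv ca h V \<longrightarrow>
       real ((ca + n) * cv) \<ge> C * real n ^ 2 \<and> real (ca + cv) \<ge> C * real n"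
proof (intro exI[of _ "1/2304"] conjI exI[of _ 4] allI impI)
  show "(0::real) < 1/2304" by simp
  fix n F S cv ca h V
  assume n: "4 \<le> n" and F: "F = connected_xor n \<or> F = bipartite_xor n"
    and sch: "online_scheme n F S cv ca h V"
  have k: "n * n \<le> 1152 * ((ca + n) * cv)" by (rule main_nat2[OF n F sch])
  then have kr: "real n * real n \<le> 1152 * real ((ca + n) * cv)"
    by (metis of_nat_mult of_nat_le_iff of_nat_numeral)
  show "real ((ca + n) * cv) \<ge> 1/2304 * real n ^ 2"
  proof -
    have nn: "0 \<le> real ((ca + n) * cv)" by (rule of_nat_0_le_iff)
    have p: "1/2304 * real n ^ 2 = (real n * real n) / 2304" by (simp add: power2_eq_square)
    show ?thesis unfolding p using kr nn by linarith
  qed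
  show "real (ca + cv) \<ge> 1/2304 * real n"
  proof (cases "n \<le> ca")
    case True then show ?thesis by simp
  next
    case False
    have "(ca + n) * cv \<le> (2 * n) * cv" using False by (intro mult_right_mono) simp_all
    then have "1152 * ((ca + n) * cv) \<le> 1152 * ((2 * n) * cv)" by (rule mult_left_mono) simp
    also have "1152 * ((2 * n) * cv) = n * (2304 * cv)" by simp
    finally have "n * n \<le> n * (2304 * cv)" using k by (rule order.trans[rotated])
    then have "n \<le> 2304 * cv" using n by (simp add: nat_mult_le_cancel_disj)
    then have "real n \<le> 2304 * real cv" by linarith
    then show ?thesis by simp
  qed
qed


end
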